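(* Let $X\in\mathbb{R}^d$, $Y\in\mathbb{R}$, $H\in\mathbb{R}^q$, $I\in\mathbb{R}^m$ be generated by the linear structural causal model $$X := BX + AI + h(H,\epsilon^X),\qquad Y := X^\top\beta^* + g(H,\epsilon^Y),$$ where $B\in\mathbb{R}^{d\times d}$ with $\operatorname{Id}-B$ invertible, $A\in\mathbb{R}^{d\times m}$, $\beta^*\in\mathbb{R}^d$, $h,g$ are arbitrary measurable functions, $I,H,\epsilon^X,\epsilon^Y$ are jointly independent, and $\operatorname{Cov}[I]$ is invertible. Let $C:=A^\top(\operatorname{Id}-B)^{-\top}\in\mathbb{R}^{m\times d}$ and $\mathcal{B}:=\{\beta\in\mathbb{R}^d : \operatorname{Cov}(I,X)\beta=\operatorname{Cov}(I,Y)\}$. Then for every $j\in\{1,\dots,d\}$: $$\beta^*_j \text{ is identifiable by the moment condition } \operatorname{Cov}(I,Y-X^\top\beta)=0 \iff \operatorname{Null}(C)_j=\{0\},$$ where $\operatorname{Null}(C)_j=\{w_j : w\in\operatorname{Null}(C)\}$. Moreover, whenever $\operatorname{Null}(C)_j=\{0\}$, it holds that $\beta^*_j=\big(\operatorname{Cov}(I,X)^{\dagger}\operatorname{Cov}(I,Y)\big)_j$, where $(\cdot)^\dagger$ denotes the Moore–Penrose inverse.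
   Context: "$\beta^*_j$ is identifiable by the moment condition" means that every $\beta\in\mathcal{B}$ (the solution set of $\operatorname{Cov}(I,Y-X^\top\beta)=0$) satisfies $\beta_j=\beta^*_j$, i.e. $\{\beta_j:\beta\in\mathcal{B}\}=\{\beta^*_j\}$. All covariances involved are assumed to exist. $M^{-\top}$ denotes $(M^{-1})^\top$. *)

theory Defs
  imports "HOL-Analysis.Analysis" "HOL-Probability.Probability"
begin

text \<open>Covariance of two real random variables (centred form).\<close>
definition covar :: "'a measure \<Rightarrow> ('a \<Rightarrow> real) \<Rightarrow> ('a \<Rightarrow> real) \<Rightarrow> real" where
  "covar M U V = (\<integral>\<omega>. (U \<omega> - (\<integral>\<omega>'. U \<omega>' \<partial>M)) * (V \<omega> - (\<integral>\<omega>'. V \<omega>' \<partial>M)) \<partial>M)"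

text \<open>Cross-covariance matrix Cov(U,V), entry (i,k) = Cov(U_i, V_k).\<close>
definition cov_mat :: "'a measure \<Rightarrow> ('a \<Rightarrow> real^'m) \<Rightarrow> ('a \<Rightarrow> real^'n) \<Rightarrow> real^'n^'m" where
  "cov_mat M U V = (\<chi> i k. covar M (\<lambda>\<omega>. U \<omega> $ i) (\<lambda>\<omega>. V \<omega> $ k))"

text \<open>Covariance vector Cov(U,W) for a vector U and a scalar W.\<close>
definition cov_vec :: "'a measure \<Rightarrow> ('a \<Rightarrow> real^'m) \<Rightarrow> ('a \<Rightarrow> real) \<Rightarrow> real^'m" where
  "cov_vec M U W = (\<chi> i. covar M (\<lambda>\<omega>. U \<omega> $ i) W)"

text \<open>Moore--Penrose inverse, via the four Penrose conditions.\<close>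
definition moore_penrose :: "real^'n^'m \<Rightarrow> real^'m^'n" where
  "moore_penrose Q = (THE G. Q ** G ** Q = Q \<and> G ** Q ** G = G \<and>
      transpose (Q ** G) = Q ** G \<and> transpose (G ** Q) = G ** Q)"

text \<open>Joint independence of four random variables with possibly different codomains
  (literally the unfolding of indep_vars, with index set {0,1,2,3}).\<close>
definition indep4 :: "'a measure \<Rightarrow> ('a \<Rightarrow> 'b) \<Rightarrow> 'b measure \<Rightarrow> ('a \<Rightarrow> 'c) \<Rightarrow> 'c measure
    \<Rightarrow> ('a \<Rightarrow> 'd) \<Rightarrow> 'd measure \<Rightarrow> ('a \<Rightarrow> 'e) \<Rightarrow> 'e measure \<Rightarrow> bool" where
  "indep4 M V1 N1 V2 N2 V3 N3 V4 N4 \<longleftrightarrow>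
     V1 \<in> measurable M N1 \<and> V2 \<in> measurable M N2 \<and> V3 \<in> measurable M N3 \<and> V4 \<in> measurable M N4 \<and>
     prob_space.indep_sets M
       (\<lambda>i::nat. [ {V1 -` A \<inter> space M | A. A \<in> sets N1}, {V2 -` A \<inter> space M | A. A \<in> sets N2},
                  {V3 -` A \<inter> space M | A. A \<in> sets N3}, {V4 -` A \<inter> space M | A. A \<in> sets N4} ] ! i)
       {0..<4}"

text \<open>Solution set of the moment condition Cov(I, Y - X^T beta) = 0.\<close>
definition moment_solutions :: "'a measure \<Rightarrow> ('a \<Rightarrow> real^'m) \<Rightarrow> ('a \<Rightarrow> real^'d) \<Rightarrow> ('a \<Rightarrow> real) \<Rightarrow> (real^'d) set" where
  "moment_solutions M I X Y = {\<beta>. \<forall>i. covar M (\<lambda>\<omega>. I \<omega> $ i) (\<lambda>\<omega>. Y \<omega> - X \<omega> \<bullet> \<beta>) = 0}"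

text \<open>beta*_j is identifiable by the moment condition.\<close>
definition identifiable_coord :: "'a measure \<Rightarrow> ('a \<Rightarrow> real^'m) \<Rightarrow> ('a \<Rightarrow> real^'d) \<Rightarrow> ('a \<Rightarrow> real) \<Rightarrow> real^'d \<Rightarrow> 'd \<Rightarrow> bool" where
  "identifiable_coord M I X Y \<beta>s j \<longleftrightarrow> {\<beta> $ j | \<beta>. \<beta> \<in> moment_solutions M I X Y} = {\<beta>s $ j}"

text \<open>Null(C)_j = {w_j : C w = 0}.\<close>
definition null_coord :: "real^'d^'m \<Rightarrow> 'd \<Rightarrow> real set" where
  "null_coord C j = {w $ j | w. C *v w = 0}"

end

theory Submission
  imports Defs
begin


lemma mp_unique:
  fixes Q :: "real^'n^'m" and G1 G2 :: "real^'m^'n"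
  assumes a1: "Q ** G1 ** Q = Q" "G1 ** Q ** G1 = G1" "transpose (Q ** G1) = Q ** G1" "transpose (G1 ** Q) = G1 ** Q"
  and a2: "Q ** G2 ** Q = Q" "G2 ** Q ** G2 = G2" "transpose (Q ** G2) = Q ** G2" "transpose (G2 ** Q) = G2 ** Q"
  shows "G1 = G2"
proof -
  have "G1 = G1 ** (Q ** G1)" using a1(2) by (simp add: matrix_mul_assoc)
  also have "\<dots> = G1 ** transpose (Q ** G1)" using a1(3) by simp
  also have "\<dots> = G1 ** transpose G1 ** transpose Q" by (simp add: matrix_transpose_mul matrix_mul_assoc)
  also have "\<dots> = G1 ** transpose G1 ** transpose (Q ** G2 ** Q)" using a2(1) by simp
  also have "\<dots> = G1 ** (transpose (Q ** G1) ** transpose (Q ** G2))" by (simp add: matrix_transpose_mul matrix_mul_assoc)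
  also have "\<dots> = G1 ** (Q ** G1 ** (Q ** G2))" using a1(3) a2(3) by simp
  also have "\<dots> = G1 ** Q ** G2" using a1(1) by (simp add: matrix_mul_assoc)
  finally have e1: "G1 = G1 ** Q ** G2" .
  have "G2 = (G2 ** Q) ** G2" using a2(2) by (simp add: matrix_mul_assoc)
  also have "\<dots> = transpose (G2 ** Q) ** G2" using a2(4) by simp
  also have "\<dots> = transpose Q ** transpose G2 ** G2" by (simp add: matrix_transpose_mul matrix_mul_assoc)
  also have "\<dots> = transpose (Q ** G1 ** Q) ** transpose G2 ** G2" using a1(1) by simp
  also have "\<dots> = (transpose (G1 ** Q) ** transpose (G2 ** Q)) ** G2" by (simp add: matrix_transpose_mul matrix_mul_assoc)
  also have "\<dots> = (G1 ** Q ** (G2 ** Q)) ** G2" using a1(4) a2(4) by simp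
  also have "\<dots> = G1 ** Q ** (G2 ** Q ** G2)" by (simp add: matrix_mul_assoc)
  also have "\<dots> = G1 ** Q ** G2" using a2(2) by simp
  finally show ?thesis using e1 by simp
qed


lemma dot_transpose: "(u::real^'m) \<bullet> (transpose P *v v) = (P *v u) \<bullet> v"
proof -
  have "u \<bullet> (transpose P *v v) = u \<bullet> (v v* P)" by simp
  also have "\<dots> = (v v* P) \<bullet> u" by (rule inner_commute)
  also have "\<dots> = v \<bullet> (P *v u)" by (rule dot_lmul_matrix)
  also have "\<dots> = (P *v u) \<bullet> v" by (rule inner_commute)
  finally show ?thesis .
qed

lemma subspace_range_mat: "subspace (range (\<lambda>w. (A::real^'n^'m) *v w))"
  unfolding subspace_def
proof (intro conjI ballI allI)
  show "0 \<in> range (\<lambda>w. A *v w)" by (metis matrix_vector_mult_0_right rangeI)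
next
  fix x y assume "x \<in> range (\<lambda>w. A *v w)" "y \<in> range (\<lambda>w. A *v w)"
  then obtain a b where "x = A *v a" "y = A *v b" by auto
  then have "x + y = A *v (a + b)" by (simp add: matrix_vector_right_distrib)
  then show "x + y \<in> range (\<lambda>w. A *v w)" by auto
next
  fix c x assume "x \<in> range (\<lambda>w. A *v w)"
  then obtain a where "x = A *v a" by auto
  then have "c *\<^sub>R x = A *v (c *\<^sub>R a)" by (simp add: matrix_vector_mult_scaleR)
  then show "c *\<^sub>R x \<in> range (\<lambda>w. A *v w)" by auto
qed

lemma rowspace_null:
  fixes Q :: "real^'n^'m"
  assumes "x \<in> range (\<lambda>w. transpose Q *v w)" "Q *v x = 0"
  shows "x = 0"
proof -
  obtain w where w: "x = transpose Q *v w" using assms(1) by auto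
  have "x \<bullet> x = w \<bullet> (Q *v x)" using w by (simp add: dot_lmul_matrix)
  then show ?thesis using assms(2) by simp
qed

lemma rowspace_orth_null:
  fixes Q :: "real^'n^'m"
  assumes "x \<in> range (\<lambda>w. transpose Q *v w)" "Q *v v = 0"
  shows "x \<bullet> v = 0"
proof -
  obtain w where w: "x = transpose Q *v w" using assms(1) by auto
  have "x \<bullet> v = w \<bullet> (Q *v v)" using w by (simp add: dot_lmul_matrix)
  then show ?thesis using assms(2) by simp
qed

definition mpR :: "real^'n^'m \<Rightarrow> real^'m \<Rightarrow> real^'n \<Rightarrow> bool" where
  "mpR Q y x \<longleftrightarrow> x \<in> range (\<lambda>w. transpose Q *v w) \<and> (\<forall>z. (y - Q *v x) \<bullet> (Q *v z) = 0)"

lemma mpR_ex: "\<exists>x. mpR (Q::real^'n^'m) y x"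
proof -
  obtain t r where t: "t \<in> span (range (\<lambda>w. Q *v w))"
    and r: "\<And>w. w \<in> span (range (\<lambda>w. Q *v w)) \<Longrightarrow> orthogonal r w" and yr: "y = t + r"
    using orthogonal_subspace_decomp_exists by blast
  have sp: "span (range (\<lambda>w. Q *v w)) = range (\<lambda>w. Q *v w)"
    by (rule span_eq_iff[THEN iffD2, OF subspace_range_mat])
  from t have "t \<in> range (\<lambda>w. Q *v w)" by (simp only: sp)
  then obtain s where s: "t = Q *v s" by blast
  obtain s1 s2 where s1: "s1 \<in> span (range (\<lambda>w. transpose Q *v w))"
    and s2: "\<And>w. w \<in> span (range (\<lambda>w. transpose Q *v w)) \<Longrightarrow> orthogonal s2 w" and ss: "s = s1 + s2"
    using orthogonal_subspace_decomp_exists by blast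
  have sp2: "span (range (\<lambda>w. transpose Q *v w)) = range (\<lambda>w. transpose Q *v w)"
    by (rule span_eq_iff[THEN iffD2, OF subspace_range_mat])
  have s1r: "s1 \<in> range (\<lambda>w. transpose Q *v w)" using s1 by (simp only: sp2)
  have "(Q *v s2) \<bullet> (Q *v s2) = s2 \<bullet> (transpose Q *v (Q *v s2))"
    by (metis dot_transpose inner_commute)
  also have "\<dots> = 0" using s2[of "transpose Q *v (Q *v s2)"] by (simp add: span_base orthogonal_def)
  finally have "Q *v s2 = 0" by simp
  then have "Q *v s1 = t" using s ss by (simp add: matrix_vector_right_distrib)
  moreover have "\<forall>z. r \<bullet> (Q *v z) = 0" using r by (simp add: span_base orthogonal_def)
  ultimately show ?thesis unfolding mpR_def using s1r yr
    by (metis add_diff_cancel_left')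
qed

lemma mpR_unique:
  fixes Q :: "real^'n^'m"
  assumes "mpR Q y x1" "mpR Q y x2" shows "x1 = x2"
proof -
  have "(Q *v x1 - Q *v x2) \<bullet> (Q *v (x1 - x2)) = (y - Q *v x2) \<bullet> (Q *v (x1 - x2)) - (y - Q *v x1) \<bullet> (Q *v (x1 - x2))"
    by (simp add: inner_diff_left)
  also have "\<dots> = 0" using assms unfolding mpR_def by simp
  finally have "Q *v (x1 - x2) = 0" by (simp add: matrix_vector_mult_diff_distrib)
  moreover have "x1 - x2 \<in> range (\<lambda>w. transpose Q *v w)" using assms unfolding mpR_def
    by (metis subspace_diff subspace_range_mat)
  ultimately show ?thesis using rowspace_null by fastforce
qed

definition mpg :: "real^'n^'m \<Rightarrow> real^'m \<Rightarrow> real^'n" where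
  "mpg Q y = (THE x. mpR Q y x)"

lemma mpg: "mpR Q y (mpg Q y)"
proof -
  have "\<exists>!x. mpR Q y x" using mpR_ex mpR_unique by blast
  then show ?thesis unfolding mpg_def by (rule theI')
qed

lemma mpg_eq: "mpR Q y x \<Longrightarrow> mpg Q y = x"
  using mpg mpR_unique by blast

lemma mpg_linear: "linear (mpg Q)"
proof (rule linearI)
  fix y1 y2
  show "mpg Q (y1 + y2) = mpg Q y1 + mpg Q y2"
  proof (rule mpg_eq)
    have a: "mpR Q y1 (mpg Q y1)" "mpR Q y2 (mpg Q y2)" by (rule mpg)+
    show "mpR Q (y1 + y2) (mpg Q y1 + mpg Q y2)" using a unfolding mpR_def
      apply (intro conjI allI)
       apply (metis subspace_add subspace_range_mat)
      apply (simp add: matrix_vector_right_distrib algebra_simps inner_diff_left inner_add_left)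
      done
  qed
next
  fix c y
  show "mpg Q (c *\<^sub>R y) = c *\<^sub>R mpg Q y"
  proof (rule mpg_eq)
    have a: "mpR Q y (mpg Q y)" by (rule mpg)
    show "mpR Q (c *\<^sub>R y) (c *\<^sub>R mpg Q y)" using a unfolding mpR_def
      apply (intro conjI allI)
       apply (metis subspace_scale subspace_range_mat)
      apply (simp add: matrix_vector_mult_scaleR algebra_simps inner_diff_left)
      done
  qed
qed

lemma mp_exists:
  fixes Q :: "real^'n^'m"
  shows "\<exists>G. Q ** G ** Q = Q \<and> G ** Q ** G = G \<and>
      transpose (Q ** G) = Q ** G \<and> transpose (G ** Q) = G ** Q"
proof -
  define G where "G = matrix (mpg Q)"
  have Gv: "G *v y = mpg Q y" for y
    unfolding G_def using mpg_linear[of Q] by (simp add: matrix_works linear_matrix_vector_mul_eq)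
  have proj: "mpg Q (Q *v x) = x - (x - mpg Q (Q *v x))" for x by simp
  have QG: "Q *v mpg Q (Q *v x) = Q *v x" for x
  proof -
    have m: "mpR Q (Q *v x) (mpg Q (Q *v x))" by (rule mpg)
    then have "(Q *v x - Q *v mpg Q (Q *v x)) \<bullet> (Q *v (x - mpg Q (Q *v x))) = 0"
      unfolding mpR_def by blast
    then show ?thesis by (simp add: matrix_vector_mult_diff_distrib)
  qed
  have c1: "Q ** G ** Q = Q"
    by (simp add: matrix_eq Gv QG flip: matrix_vector_mul_assoc)
  have c2: "G ** Q ** G = G"
  proof -
    have "mpg Q (Q *v mpg Q y) = mpg Q y" for y
      by (rule mpg_eq) (use mpg[of Q y] in \<open>simp add: mpR_def\<close>)
    then show ?thesis by (simp add: matrix_eq Gv flip: matrix_vector_mul_assoc)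
  qed
  have sym: "transpose P = P" if "\<And>u v. u \<bullet> (P *v v) = (P *v u) \<bullet> v" for P :: "real^'k^'k"
  proof -
    have "transpose P *v v = P *v v" for v
    proof -
      have "u \<bullet> (transpose P *v v) = u \<bullet> (P *v v)" for u
        using that[of v u] by (metis dot_transpose inner_commute)
      then have h: "u \<bullet> (transpose P *v v - P *v v) = 0" for u
        by (simp add: inner_diff_right)
      show ?thesis using h[of "transpose P *v v - P *v v"] by simp
    qed
    then show ?thesis by (simp add: matrix_eq)
  qed
  have c3: "transpose (Q ** G) = Q ** G"
  proof (rule sym)
    fix u v
    have d: "u = Q *v mpg Q u + (u - Q *v mpg Q u)" for u by simp
    have o: "(u - Q *v mpg Q u) \<bullet> (Q *v z) = 0" for u z using mpg[of Q u] by (simp add: mpR_def)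
    have "u \<bullet> (Q *v mpg Q v) = (Q *v mpg Q u) \<bullet> (Q *v mpg Q v)"
      using o[of u "mpg Q v"] by (metis add_diff_cancel_left' d inner_add_left add_0_right)
    moreover have "(Q *v mpg Q u) \<bullet> v = (Q *v mpg Q u) \<bullet> (Q *v mpg Q v)"
      using o[of v "mpg Q u"] by (metis add_diff_cancel_left' d inner_add_right add_0_right inner_commute)
    ultimately show "u \<bullet> ((Q ** G) *v v) = ((Q ** G) *v u) \<bullet> v"
      by (simp add: Gv flip: matrix_vector_mul_assoc)
  qed
  have c4: "transpose (G ** Q) = G ** Q"
  proof (rule sym)
    fix u v
    have inr: "mpg Q y \<in> range (\<lambda>w. transpose Q *v w)" for y using mpg[of Q y] by (simp add: mpR_def)
    have nul: "Q *v (u - mpg Q (Q *v u)) = 0" for u by (simp add: QG matrix_vector_mult_diff_distrib)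
    have e1: "mpg Q (Q *v v) \<bullet> (u - mpg Q (Q *v u)) = 0"
      by (rule rowspace_orth_null[OF inr nul])
    have e2: "mpg Q (Q *v u) \<bullet> (v - mpg Q (Q *v v)) = 0"
      by (rule rowspace_orth_null[OF inr nul])
    have "u \<bullet> mpg Q (Q *v v) = mpg Q (Q *v u) \<bullet> mpg Q (Q *v v)"
      using e1 by (simp add: inner_diff_right inner_commute)
    moreover have "mpg Q (Q *v u) \<bullet> v = mpg Q (Q *v u) \<bullet> mpg Q (Q *v v)"
      using e2 by (simp add: inner_diff_right)
    ultimately show "u \<bullet> ((G ** Q) *v v) = ((G ** Q) *v u) \<bullet> v"
      by (simp add: Gv flip: matrix_vector_mul_assoc)
  qed
  show ?thesis using c1 c2 c3 c4 by blast
qed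

lemma moore_penrose:
  fixes Q :: "real^'n^'m"
  shows "Q ** moore_penrose Q ** Q = Q"
proof -
  have "\<exists>!G. Q ** G ** Q = Q \<and> G ** Q ** G = G \<and>
      transpose (Q ** G) = Q ** G \<and> transpose (G ** Q) = G ** Q"
    using mp_exists[of Q] mp_unique[of Q] by blast
  from theI'[OF this] show ?thesis unfolding moore_penrose_def by blast
qed



lemma covar_cong:
  assumes "\<And>\<omega>. \<omega> \<in> space M \<Longrightarrow> V \<omega> = V' \<omega>"
  shows "covar M U V = covar M U V'"
proof -
  have "(\<integral>\<omega>. V \<omega> \<partial>M) = (\<integral>\<omega>. V' \<omega> \<partial>M)"
    using assms by (intro Bochner_Integration.integral_cong) auto
  then show ?thesis unfolding covar_def
    using assms by (intro Bochner_Integration.integral_cong) auto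
qed

lemma covar_alt:
  assumes P: "prob_space M" and U: "integrable M U"
  shows "covar M U V = (\<integral>\<omega>. (U \<omega> - (\<integral>\<omega>'. U \<omega>' \<partial>M)) * V \<omega> \<partial>M)"
proof -
  interpret prob_space M by fact
  define a where "a = (\<integral>\<omega>'. U \<omega>' \<partial>M)"
  define b where "b = (\<integral>\<omega>'. V \<omega>' \<partial>M)"
  have Ua: "integrable M (\<lambda>\<omega>. U \<omega> - a)" using U by simp
  have int0: "(\<integral>\<omega>. (U \<omega> - a) \<partial>M) = 0" using U by (simp add: a_def prob_space)
  have eq: "(U \<omega> - a) * (V \<omega> - b) = (U \<omega> - a) * V \<omega> - b * (U \<omega> - a)" for \<omega>
    by (simp add: algebra_simps)
  show ?thesis
  proof (cases "integrable M (\<lambda>\<omega>. (U \<omega> - a) * V \<omega>)")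
    case True
    have "covar M U V = (\<integral>\<omega>. (U \<omega> - a) * V \<omega> - b * (U \<omega> - a) \<partial>M)"
      unfolding covar_def a_def[symmetric] b_def[symmetric] eq ..
    also have "\<dots> = (\<integral>\<omega>. (U \<omega> - a) * V \<omega> \<partial>M) - b * (\<integral>\<omega>. (U \<omega> - a) \<partial>M)"
      using True Ua by (simp add: Bochner_Integration.integral_diff)
    finally show ?thesis using int0 by (simp add: a_def)
  next
    case False
    have "\<not> integrable M (\<lambda>\<omega>. (U \<omega> - a) * V \<omega> - b * (U \<omega> - a))"
    proof
      assume "integrable M (\<lambda>\<omega>. (U \<omega> - a) * V \<omega> - b * (U \<omega> - a))"
      then have "integrable M (\<lambda>\<omega>. ((U \<omega> - a) * V \<omega> - b * (U \<omega> - a)) + b * (U \<omega> - a))"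
        using Ua by (intro Bochner_Integration.integrable_add) auto
      then show False using False by simp
    qed
    then have "covar M U V = 0"
      unfolding covar_def a_def[symmetric] b_def[symmetric] eq by (rule not_integrable_integral_eq)
    then show ?thesis using False by (simp add: a_def not_integrable_integral_eq)
  qed
qed

lemma covar_sum:
  assumes P: "prob_space M" and U: "integrable M U" and S: "finite S"
    and V: "\<And>l. l \<in> S \<Longrightarrow> integrable M (V l)" and UV: "\<And>l. l \<in> S \<Longrightarrow> integrable M (\<lambda>\<omega>. U \<omega> * V l \<omega>)"
  shows "covar M U (\<lambda>\<omega>. \<Sum>l\<in>S. c l * V l \<omega>) = (\<Sum>l\<in>S. c l * covar M U (V l))"
proof -
  define a where "a = (\<integral>\<omega>'. U \<omega>' \<partial>M)"
  have i: "integrable M (\<lambda>\<omega>. c l * ((U \<omega> - a) * V l \<omega>))" if "l \<in> S" for l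
  proof -
    have "integrable M (\<lambda>\<omega>. U \<omega> * V l \<omega> - a * V l \<omega>)"
      using V[OF that] UV[OF that] by auto
    then have "integrable M (\<lambda>\<omega>. c l * (U \<omega> * V l \<omega> - a * V l \<omega>))" by simp
    then show ?thesis by (simp add: algebra_simps)
  qed
  have "covar M U (\<lambda>\<omega>. \<Sum>l\<in>S. c l * V l \<omega>) = (\<integral>\<omega>. (\<Sum>l\<in>S. c l * ((U \<omega> - a) * V l \<omega>)) \<partial>M)"
    unfolding covar_alt[OF P U] a_def[symmetric]
    by (simp add: sum_distrib_left algebra_simps)
  also have "\<dots> = (\<Sum>l\<in>S. c l * (\<integral>\<omega>. (U \<omega> - a) * V l \<omega> \<partial>M))"
    using i by (simp add: Bochner_Integration.integral_sum)
  also have "\<dots> = (\<Sum>l\<in>S. c l * covar M U (V l))"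
    unfolding covar_alt[OF P U] a_def ..
  finally show ?thesis .
qed

lemma covar_add:
  assumes P: "prob_space M" and U: "integrable M U"
    and V: "integrable M V" "integrable M V'" and UV: "integrable M (\<lambda>\<omega>. U \<omega> * V \<omega>)" "integrable M (\<lambda>\<omega>. U \<omega> * V' \<omega>)"
  shows "covar M U (\<lambda>\<omega>. V \<omega> + V' \<omega>) = covar M U V + covar M U V'"
proof -
  define a where "a = (\<integral>\<omega>'. U \<omega>' \<partial>M)"
  have i1: "integrable M (\<lambda>\<omega>. (U \<omega> - a) * V \<omega>)"
  proof -
    have "integrable M (\<lambda>\<omega>. U \<omega> * V \<omega> - a * V \<omega>)" using V UV by auto
    then show ?thesis by (simp add: algebra_simps)
  qed
  have i2: "integrable M (\<lambda>\<omega>. (U \<omega> - a) * V' \<omega>)"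
  proof -
    have "integrable M (\<lambda>\<omega>. U \<omega> * V' \<omega> - a * V' \<omega>)" using V UV by auto
    then show ?thesis by (simp add: algebra_simps)
  qed
  show ?thesis unfolding covar_alt[OF P U] a_def[symmetric]
    using i1 i2 by (simp add: distrib_left Bochner_Integration.integral_add)
qed

lemma abs_mult_le_sq: "\<bar>(u::real) * v\<bar> \<le> u\<^sup>2 + v\<^sup>2"
proof -
  have "0 \<le> (\<bar>u\<bar> - \<bar>v\<bar>)\<^sup>2" by simp
  then have "2 * (\<bar>u\<bar> * \<bar>v\<bar>) \<le> u\<^sup>2 + v\<^sup>2" by (simp add: power2_eq_square algebra_simps)
  moreover have "0 \<le> \<bar>u\<bar> * \<bar>v\<bar>" by simp
  ultimately have "\<bar>u\<bar> * \<bar>v\<bar> \<le> u\<^sup>2 + v\<^sup>2" by linarith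
  then show ?thesis by (simp add: abs_mult)
qed

lemma integrable_L2_mult:
  fixes U V :: "'a \<Rightarrow> real"
  assumes "U \<in> borel_measurable M" "V \<in> borel_measurable M"
    "integrable M (\<lambda>\<omega>. (U \<omega>)\<^sup>2)" "integrable M (\<lambda>\<omega>. (V \<omega>)\<^sup>2)"
  shows "integrable M (\<lambda>\<omega>. U \<omega> * V \<omega>)"
proof (rule Bochner_Integration.integrable_bound[where f="\<lambda>\<omega>. (U \<omega>)\<^sup>2 + (V \<omega>)\<^sup>2"])
  show "integrable M (\<lambda>\<omega>. (U \<omega>)\<^sup>2 + (V \<omega>)\<^sup>2)" using assms by auto
  show "(\<lambda>\<omega>. U \<omega> * V \<omega>) \<in> borel_measurable M" using assms by auto
  show "AE x in M. norm (U x * V x) \<le> norm ((U x)\<^sup>2 + (V x)\<^sup>2)"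
    using abs_mult_le_sq by (auto simp: abs_of_nonneg)
qed

lemma Int_stable_vimage: "Int_stable {V -` A \<inter> \<Omega> | A. A \<in> sets N}"
  unfolding Int_stable_def
proof (safe)
  fix A B assume "A \<in> sets N" "B \<in> sets N"
  then show "\<exists>C. (V -` A \<inter> \<Omega>) \<inter> (V -` B \<inter> \<Omega>) = V -` C \<inter> \<Omega> \<and> C \<in> sets N"
    by (intro exI[of _ "A \<inter> B"]) auto
qed

lemma indep_part:
  assumes P: "prob_space M" and ind: "prob_space.indep_sets M F {0..<4::nat}"
    and st: "\<And>i. i < 4 \<Longrightarrow> Int_stable (F i)" and k: "k \<in> {2,3}"
  shows "prob_space.indep_set M (sigma_sets (space M) (F 0)) (sigma_sets (space M) (F 1 \<union> F k))"
proof -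
  interpret prob_space M by fact
  define J where "J = (\<lambda>b::bool. if b then {0::nat} else {1,k})"
  have "indep_sets F (\<Union>b. J b)"
    by (rule indep_sets_mono_index[OF _ ind]) (use k in \<open>auto simp: J_def\<close>)
  then have "indep_sets (\<lambda>b. sigma_sets (space M) (\<Union>i\<in>J b. F i)) UNIV"
    by (rule indep_sets_collect_sigma) (use k st in \<open>auto simp: J_def disjoint_family_on_def split: if_splits\<close>)
  moreover have "(\<lambda>b. sigma_sets (space M) (\<Union>i\<in>J b. F i)) =
      case_bool (sigma_sets (space M) (F 0)) (sigma_sets (space M) (F 1 \<union> F k))"
    by (rule ext, simp add: J_def split: bool.split)
  ultimately show ?thesis unfolding indep_set_def by simp
qed

lemma indep_var_from_sigma:
  assumes P: "prob_space M"
    and ind: "prob_space.indep_set M (sigma_sets (space M) EA) (sigma_sets (space M) EB)"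
    and EA: "EA \<subseteq> sets M" and EB: "EB \<subseteq> sets M"
    and U: "U \<in> borel_measurable (sigma (space M) EA)" and V: "V \<in> borel_measurable (sigma (space M) EB)"
  shows "prob_space.indep_var M borel U borel V"
proof -
  interpret prob_space M by fact
  have EAp: "EA \<subseteq> Pow (space M)" using EA sets.sets_into_space by auto
  have EBp: "EB \<subseteq> Pow (space M)" using EB sets.sets_into_space by auto
  have sA: "sigma_sets (space M) EA \<subseteq> sets M" by (rule sets.sigma_sets_subset[OF EA])
  have sB: "sigma_sets (space M) EB \<subseteq> sets M" by (rule sets.sigma_sets_subset[OF EB])
  have UA: "U -` A \<inter> space M \<in> sigma_sets (space M) EA" if "A \<in> sets borel" for A
    using measurable_sets[OF U that] by (simp add: sets_measure_of[OF EAp] space_measure_of[OF EAp])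
  have VB: "V -` A \<inter> space M \<in> sigma_sets (space M) EB" if "A \<in> sets borel" for A
    using measurable_sets[OF V that] by (simp add: sets_measure_of[OF EBp] space_measure_of[OF EBp])
  have rU: "random_variable borel U" by (rule measurableI) (use UA sA in auto)
  have rV: "random_variable borel V" by (rule measurableI) (use VB sB in auto)
  have s1: "sigma_sets (space M) {U -` A \<inter> space M |A. A \<in> sets borel} \<subseteq> sigma_sets (space M) EA"
    by (rule sigma_algebra.sigma_sets_subset[OF sigma_algebra_sigma_sets[OF EAp]]) (use UA in auto)
  have s2: "sigma_sets (space M) {V -` A \<inter> space M |A. A \<in> sets borel} \<subseteq> sigma_sets (space M) EB"
    by (rule sigma_algebra.sigma_sets_subset[OF sigma_algebra_sigma_sets[OF EBp]]) (use VB in auto)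
  have "indep_set (sigma_sets (space M) {U -` A \<inter> space M |A. A \<in> sets borel})
                  (sigma_sets (space M) {V -` A \<inter> space M |A. A \<in> sets borel})"
    using ind unfolding indep_set_def
    by (rule indep_sets_mono_sets) (use s1 s2 in \<open>auto split: bool.split\<close>)
  then show ?thesis unfolding indep_var_eq using rU rV by simp
qed



lemma measurable_sigma_gen:
  assumes "V \<in> measurable M N" "{V -` A \<inter> space M | A. A \<in> sets N} \<subseteq> Ee" "Ee \<subseteq> Pow (space M)"
  shows "V \<in> measurable (sigma (space M) Ee) N"
proof (rule measurableI)
  fix x assume "x \<in> space (sigma (space M) Ee)"
  then show "V x \<in> space N" using assms(1,3) by (auto simp: space_measure_of measurable_space)
next
  fix A assume "A \<in> sets N"
  then have "V -` A \<inter> space M \<in> Ee" using assms(2) by blast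
  then show "V -` A \<inter> space (sigma (space M) Ee) \<in> sets (sigma (space M) Ee)"
    using assms(3) by (simp add: space_measure_of sets_measure_of)
qed

lemma vec_nth_borel[measurable]: "(\<lambda>x::real^'n. x $ i) \<in> borel_measurable borel"
  by (intro borel_measurable_continuous_onI continuous_on_component continuous_on_id)

lemma vec_nth_meas[measurable (raw)]: "f \<in> borel_measurable N \<Longrightarrow> (\<lambda>x. (f x :: real^'n) $ i) \<in> borel_measurable N"
  using measurable_compose[OF _ vec_nth_borel] by blast

lemma integrable_eq_on:
  assumes "integrable M f" "\<And>x. x \<in> space M \<Longrightarrow> g x = f x"
  shows "integrable M g"
  using assms Bochner_Integration.integrable_cong[of M M g f] by auto

lemma invertible_mult_zero:
  fixes S :: "real^'m^'m"
  assumes "invertible S" "S *v x = 0" shows "x = 0"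
proof -
  obtain S' where "S' ** S = mat 1" using assms(1) unfolding invertible_def by blast
  then have "x = S' *v (S *v x)" by (simp add: matrix_vector_mul_assoc)
  then show ?thesis using assms(2) by simp
qed

theorem proposition1:
  fixes M :: "'a measure"
    and I :: "'a \<Rightarrow> real^'m" and H :: "'a \<Rightarrow> real^'q"
    and eX :: "'a \<Rightarrow> 'ex" and eY :: "'a \<Rightarrow> 'ey"
    and NX :: "'ex measure" and NY :: "'ey measure"
    and X :: "'a \<Rightarrow> real^'d" and Y :: "'a \<Rightarrow> real"
    and B :: "real^'d^'d" and A :: "real^'m^'d" and \<beta>s :: "real^'d"
    and h :: "(real^'q) \<times> 'ex \<Rightarrow> real^'d" and g :: "(real^'q) \<times> 'ey \<Rightarrow> real"
    and j :: 'd
  assumes "prob_space M"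
    and h_meas: "h \<in> borel_measurable (borel \<Otimes>\<^sub>M NX)"
    and g_meas: "g \<in> borel_measurable (borel \<Otimes>\<^sub>M NY)"
    and indep: "indep4 M I borel H borel eX NX eY NY"
    and invB: "invertible (mat 1 - B)"
    and SCM_X: "\<forall>\<omega>\<in>space M. X \<omega> = B *v X \<omega> + A *v I \<omega> + h (H \<omega>, eX \<omega>)"
    and SCM_Y: "\<forall>\<omega>\<in>space M. Y \<omega> = X \<omega> \<bullet> \<beta>s + g (H \<omega>, eY \<omega>)"
    and I_L2: "\<forall>i. integrable M (\<lambda>\<omega>. I \<omega> $ i) \<and> integrable M (\<lambda>\<omega>. (I \<omega> $ i)\<^sup>2)"
    and X_L2: "\<forall>k. integrable M (\<lambda>\<omega>. X \<omega> $ k) \<and> integrable M (\<lambda>\<omega>. (X \<omega> $ k)\<^sup>2)"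
    and Y_L2: "integrable M Y \<and> integrable M (\<lambda>\<omega>. (Y \<omega>)\<^sup>2)"
    and covI: "invertible (cov_mat M I I)"
  defines "C \<equiv> transpose A ** transpose (matrix_inv (mat 1 - B))"
  shows "(identifiable_coord M I X Y \<beta>s j \<longleftrightarrow> null_coord C j = {0})
       \<and> (null_coord C j = {0} \<longrightarrow>
            \<beta>s $ j = (moore_penrose (cov_mat M I X) *v cov_vec M I Y) $ j)"
proof -
  interpret P: prob_space M by fact
  define E where "E = (\<lambda>i::nat. [ {I -` A \<inter> space M | A. A \<in> sets borel}, {H -` A \<inter> space M | A. A \<in> sets borel},
                  {eX -` A \<inter> space M | A. A \<in> sets NX}, {eY -` A \<inter> space M | A. A \<in> sets NY} ] ! i)"
  have Imeas[measurable]: "I \<in> borel_measurable M" and Hmeas[measurable]: "H \<in> borel_measurable M"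
    and eXm[measurable]: "eX \<in> measurable M NX" and eYm[measurable]: "eY \<in> measurable M NY"
    and indE: "P.indep_sets E {0..<4}"
    using indep unfolding indep4_def E_def by auto
  have E0: "E 0 = {I -` A \<inter> space M | A. A \<in> sets borel}" and E1: "E 1 = {H -` A \<inter> space M | A. A \<in> sets borel}"
    and E2: "E 2 = {eX -` A \<inter> space M | A. A \<in> sets NX}" and E3: "E 3 = {eY -` A \<inter> space M | A. A \<in> sets NY}"
    by (simp_all add: E_def numeral_eq_Suc)
  have st: "Int_stable (E i)" if "i < 4" for i
  proof -
    have "i = 0 \<or> i = 1 \<or> i = 2 \<or> i = 3" using that by arith
    then show ?thesis using E0 E1 E2 E3 by (auto intro: Int_stable_vimage)
  qed
  have indX: "P.indep_set (sigma_sets (space M) (E 0)) (sigma_sets (space M) (E 1 \<union> E 2))"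
    by (rule indep_part[OF assms(1) indE]) (use st in auto)
  have indY: "P.indep_set (sigma_sets (space M) (E 0)) (sigma_sets (space M) (E 1 \<union> E 3))"
    by (rule indep_part[OF assms(1) indE]) (use st in auto)
  have Esets: "E 0 \<subseteq> sets M" "E 1 \<subseteq> sets M" "E 2 \<subseteq> sets M" "E 3 \<subseteq> sets M"
    unfolding E0 E1 E2 E3 by (auto intro: measurable_sets)
  have Epow: "E 0 \<subseteq> Pow (space M)" "E 1 \<union> E 2 \<subseteq> Pow (space M)" "E 1 \<union> E 3 \<subseteq> Pow (space M)"
    using Esets sets.sets_into_space by blast+
  have I0[measurable]: "I \<in> borel_measurable (sigma (space M) (E 0))"
    by (rule measurable_sigma_gen[OF Imeas _ Epow(1)]) (simp add: E0)
  have HX[measurable]: "H \<in> borel_measurable (sigma (space M) (E 1 \<union> E 2))"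
    by (rule measurable_sigma_gen[OF Hmeas _ Epow(2)]) (unfold E1 E2, blast)
  have eXX[measurable]: "eX \<in> measurable (sigma (space M) (E 1 \<union> E 2)) NX"
    by (rule measurable_sigma_gen[OF eXm _ Epow(2)]) (unfold E1 E2, blast)
  have HY[measurable]: "H \<in> borel_measurable (sigma (space M) (E 1 \<union> E 3))"
    by (rule measurable_sigma_gen[OF Hmeas _ Epow(3)]) (unfold E1 E3, blast)
  have eYY[measurable]: "eY \<in> measurable (sigma (space M) (E 1 \<union> E 3)) NY"
    by (rule measurable_sigma_gen[OF eYm _ Epow(3)]) (unfold E1 E3, blast)
  note h_meas[measurable] g_meas[measurable]
  define W where "W = (\<lambda>\<omega>. h (H \<omega>, eX \<omega>))"
  define Gg where "Gg = (\<lambda>\<omega>. g (H \<omega>, eY \<omega>))"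
  have indW: "P.indep_var borel (\<lambda>\<omega>. I \<omega> $ i - a) borel (\<lambda>\<omega>. W \<omega> $ l)" for i a l
  proof (rule indep_var_from_sigma[OF assms(1) indX Esets(1)])
    show "E 1 \<union> E 2 \<subseteq> sets M" using Esets by auto
    show "(\<lambda>\<omega>. I \<omega> $ i - a) \<in> borel_measurable (sigma (space M) (E 0))" by measurable
    show "(\<lambda>\<omega>. W \<omega> $ l) \<in> borel_measurable (sigma (space M) (E 1 \<union> E 2))" unfolding W_def by measurable
  qed
  have indG: "P.indep_var borel (\<lambda>\<omega>. I \<omega> $ i - a) borel Gg" for i a
  proof (rule indep_var_from_sigma[OF assms(1) indY Esets(1)])
    show "E 1 \<union> E 3 \<subseteq> sets M" using Esets by auto
    show "(\<lambda>\<omega>. I \<omega> $ i - a) \<in> borel_measurable (sigma (space M) (E 0))" by measurable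
    show "Gg \<in> borel_measurable (sigma (space M) (E 1 \<union> E 3))" unfolding Gg_def by measurable
  qed
  have Iint: "integrable M (\<lambda>\<omega>. I \<omega> $ i)" for i using I_L2 by blast
  have Xint: "integrable M (\<lambda>\<omega>. X \<omega> $ k)" for k using X_L2 by blast
  have Yint: "integrable M Y" using Y_L2 by blast
  have Imeas': "(\<lambda>\<omega>. I \<omega> $ i) \<in> borel_measurable M" for i by measurable
  have Xmeas': "(\<lambda>\<omega>. X \<omega> $ k) \<in> borel_measurable M" for k using Xint by (rule borel_measurable_integrable)
  have IX: "integrable M (\<lambda>\<omega>. I \<omega> $ i * X \<omega> $ k)" for i k
    by (rule integrable_L2_mult[OF Imeas' Xmeas']) (use I_L2 X_L2 in auto)
  have II: "integrable M (\<lambda>\<omega>. I \<omega> $ i * I \<omega> $ p)" for i p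
    by (rule integrable_L2_mult[OF Imeas' Imeas']) (use I_L2 in auto)
  have Weq: "W \<omega> $ l = X \<omega> $ l - (\<Sum>k\<in>UNIV. B $ l $ k * X \<omega> $ k) - (\<Sum>p\<in>UNIV. A $ l $ p * I \<omega> $ p)"
    if "\<omega> \<in> space M" for \<omega> l
  proof -
    from SCM_X that have e: "X \<omega> = B *v X \<omega> + A *v I \<omega> + h (H \<omega>, eX \<omega>)" by blast
    have c: "X \<omega> $ l = (\<Sum>k\<in>UNIV. B $ l $ k * X \<omega> $ k) + (\<Sum>p\<in>UNIV. A $ l $ p * I \<omega> $ p) + h (H \<omega>, eX \<omega>) $ l"
      using arg_cong[where f="\<lambda>v. v $ l", OF e] by (simp add: matrix_vector_mult_def)
    then show ?thesis unfolding W_def by linarith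
  qed
  have Wint: "integrable M (\<lambda>\<omega>. W \<omega> $ l)" for l
  proof -
    have "integrable M (\<lambda>\<omega>. X \<omega> $ l - (\<Sum>k\<in>UNIV. B $ l $ k * X \<omega> $ k) - (\<Sum>p\<in>UNIV. A $ l $ p * I \<omega> $ p))"
      using Xint Iint by auto
    then show ?thesis by (rule integrable_eq_on) (simp add: Weq)
  qed
  have Geq: "Gg \<omega> = Y \<omega> - (\<Sum>k\<in>UNIV. X \<omega> $ k * \<beta>s $ k)" if "\<omega> \<in> space M" for \<omega>
    using SCM_Y that unfolding Gg_def by (simp add: inner_vec_def)
  have Gint: "integrable M Gg"
  proof -
    have "integrable M (\<lambda>\<omega>. Y \<omega> - (\<Sum>k\<in>UNIV. X \<omega> $ k * \<beta>s $ k))"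
      using Xint Yint by auto
    then show ?thesis by (rule integrable_eq_on) (simp add: Geq)
  qed
  have IG: "integrable M (\<lambda>\<omega>. I \<omega> $ i * Gg \<omega>)" for i
    using P.indep_var_integrable[OF indG[of i 0] _ Gint] Iint by simp
  have covW: "covar M (\<lambda>\<omega>. I \<omega> $ i) (\<lambda>\<omega>. W \<omega> $ l) = 0" for i l
  proof -
    define a where "a = (\<integral>\<omega>. I \<omega> $ i \<partial>M)"
    have "covar M (\<lambda>\<omega>. I \<omega> $ i) (\<lambda>\<omega>. W \<omega> $ l) = (\<integral>\<omega>. (I \<omega> $ i - a) * W \<omega> $ l \<partial>M)"
      unfolding a_def by (rule covar_alt[OF assms(1) Iint])
    also have "\<dots> = (\<integral>\<omega>. (I \<omega> $ i - a) \<partial>M) * (\<integral>\<omega>. W \<omega> $ l \<partial>M)"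
      by (rule P.indep_var_lebesgue_integral[OF indW]) (use Iint Wint in auto)
    also have "(\<integral>\<omega>. (I \<omega> $ i - a) \<partial>M) = 0" using Iint by (simp add: a_def P.prob_space)
    finally show ?thesis by simp
  qed
  have covG: "covar M (\<lambda>\<omega>. I \<omega> $ i) Gg = 0" for i
  proof -
    define a where "a = (\<integral>\<omega>. I \<omega> $ i \<partial>M)"
    have "covar M (\<lambda>\<omega>. I \<omega> $ i) Gg = (\<integral>\<omega>. (I \<omega> $ i - a) * Gg \<omega> \<partial>M)"
      unfolding a_def by (rule covar_alt[OF assms(1) Iint])
    also have "\<dots> = (\<integral>\<omega>. (I \<omega> $ i - a) \<partial>M) * (\<integral>\<omega>. Gg \<omega> \<partial>M)"
      by (rule P.indep_var_lebesgue_integral[OF indG]) (use Iint Gint in auto)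
    also have "(\<integral>\<omega>. (I \<omega> $ i - a) \<partial>M) = 0" using Iint by (simp add: a_def P.prob_space)
    finally show ?thesis by simp
  qed
  define K where "K = cov_mat M I X"
  define S where "S = cov_mat M I I"
  have keyY: "covar M (\<lambda>\<omega>. I \<omega> $ i) (\<lambda>\<omega>. Y \<omega> - X \<omega> \<bullet> c) = (K *v (\<beta>s - c)) $ i" for i c
  proof -
    have eq: "Y \<omega> - X \<omega> \<bullet> c = (\<Sum>k\<in>UNIV. (\<beta>s - c) $ k * X \<omega> $ k) + Gg \<omega>" if "\<omega> \<in> space M" for \<omega>
      using Geq[OF that] by (simp add: inner_vec_def algebra_simps sum_subtractf sum.distrib)
    have "covar M (\<lambda>\<omega>. I \<omega> $ i) (\<lambda>\<omega>. Y \<omega> - X \<omega> \<bullet> c)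
        = covar M (\<lambda>\<omega>. I \<omega> $ i) (\<lambda>\<omega>. (\<Sum>k\<in>UNIV. (\<beta>s - c) $ k * X \<omega> $ k) + Gg \<omega>)"
      by (rule covar_cong) (rule eq)
    also have "\<dots> = covar M (\<lambda>\<omega>. I \<omega> $ i) (\<lambda>\<omega>. (\<Sum>k\<in>UNIV. (\<beta>s - c) $ k * X \<omega> $ k)) + covar M (\<lambda>\<omega>. I \<omega> $ i) Gg"
    proof (rule covar_add[OF assms(1) Iint])
      show "integrable M (\<lambda>\<omega>. \<Sum>k\<in>UNIV. (\<beta>s - c) $ k * X \<omega> $ k)" using Xint by auto
      show "integrable M Gg" by (rule Gint)
      have "integrable M (\<lambda>\<omega>. \<Sum>k\<in>UNIV. (\<beta>s - c) $ k * (I \<omega> $ i * X \<omega> $ k))" using IX by auto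
      then show "integrable M (\<lambda>\<omega>. I \<omega> $ i * (\<Sum>k\<in>UNIV. (\<beta>s - c) $ k * X \<omega> $ k))"
        by (simp add: sum_distrib_left algebra_simps)
      show "integrable M (\<lambda>\<omega>. I \<omega> $ i * Gg \<omega>)" by (rule IG)
    qed
    also have "covar M (\<lambda>\<omega>. I \<omega> $ i) (\<lambda>\<omega>. (\<Sum>k\<in>UNIV. (\<beta>s - c) $ k * X \<omega> $ k))
        = (\<Sum>k\<in>UNIV. (\<beta>s - c) $ k * covar M (\<lambda>\<omega>. I \<omega> $ i) (\<lambda>\<omega>. X \<omega> $ k))"
      by (rule covar_sum[OF assms(1) Iint]) (use Xint IX in auto)
    finally show ?thesis using covG by (simp add: K_def cov_mat_def matrix_vector_mult_def mult.commute)
  qed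
  have keyX: "K ** transpose (mat 1 - B) = S ** transpose A"
  proof -
    have ent: "K $ i $ l = (\<Sum>k\<in>UNIV. B $ l $ k * K $ i $ k) + (\<Sum>p\<in>UNIV. A $ l $ p * S $ i $ p)" for i l
    proof -
      have eq: "X \<omega> $ l = ((\<Sum>k\<in>UNIV. B $ l $ k * X \<omega> $ k) + (\<Sum>p\<in>UNIV. A $ l $ p * I \<omega> $ p)) + W \<omega> $ l"
        if "\<omega> \<in> space M" for \<omega> using Weq[OF that, of l] by simp
      have i1: "integrable M (\<lambda>\<omega>. (\<Sum>k\<in>UNIV. B $ l $ k * X \<omega> $ k))" using Xint by auto
      have i2: "integrable M (\<lambda>\<omega>. (\<Sum>p\<in>UNIV. A $ l $ p * I \<omega> $ p))" using Iint by auto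
      have j1: "integrable M (\<lambda>\<omega>. I \<omega> $ i * (\<Sum>k\<in>UNIV. B $ l $ k * X \<omega> $ k))"
      proof -
        have "integrable M (\<lambda>\<omega>. \<Sum>k\<in>UNIV. B $ l $ k * (I \<omega> $ i * X \<omega> $ k))" using IX by auto
        then show ?thesis by (simp add: sum_distrib_left algebra_simps)
      qed
      have j2: "integrable M (\<lambda>\<omega>. I \<omega> $ i * (\<Sum>p\<in>UNIV. A $ l $ p * I \<omega> $ p))"
      proof -
        have "integrable M (\<lambda>\<omega>. \<Sum>p\<in>UNIV. A $ l $ p * (I \<omega> $ i * I \<omega> $ p))" using II by auto
        then show ?thesis by (simp add: sum_distrib_left algebra_simps)
      qed
      have j3: "integrable M (\<lambda>\<omega>. I \<omega> $ i * W \<omega> $ l)"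
        using P.indep_var_integrable[OF indW[of i 0 l] _ Wint] Iint by simp
      have "K $ i $ l = covar M (\<lambda>\<omega>. I \<omega> $ i)
          (\<lambda>\<omega>. ((\<Sum>k\<in>UNIV. B $ l $ k * X \<omega> $ k) + (\<Sum>p\<in>UNIV. A $ l $ p * I \<omega> $ p)) + W \<omega> $ l)"
        unfolding K_def cov_mat_def by simp (rule covar_cong, rule eq)
      also have "\<dots> = covar M (\<lambda>\<omega>. I \<omega> $ i)
          (\<lambda>\<omega>. (\<Sum>k\<in>UNIV. B $ l $ k * X \<omega> $ k) + (\<Sum>p\<in>UNIV. A $ l $ p * I \<omega> $ p)) + 0"
        using covW[of i l] by (subst covar_add[OF assms(1) Iint]) (use i1 i2 j1 j2 j3 Wint in \<open>auto simp: distrib_left\<close>)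
      also have "\<dots> = covar M (\<lambda>\<omega>. I \<omega> $ i) (\<lambda>\<omega>. (\<Sum>k\<in>UNIV. B $ l $ k * X \<omega> $ k))
          + covar M (\<lambda>\<omega>. I \<omega> $ i) (\<lambda>\<omega>. (\<Sum>p\<in>UNIV. A $ l $ p * I \<omega> $ p))"
        by simp (rule covar_add[OF assms(1) Iint i1 i2 j1 j2])
      also have "\<dots> = (\<Sum>k\<in>UNIV. B $ l $ k * K $ i $ k) + (\<Sum>p\<in>UNIV. A $ l $ p * S $ i $ p)"
        unfolding K_def S_def cov_mat_def
        by (simp add: covar_sum[OF assms(1) Iint _ _ IX] covar_sum[OF assms(1) Iint _ _ II] Xint Iint)
      finally show ?thesis .
    qed
    show ?thesis
    proof -
      have "(K ** transpose (mat 1 - B)) $ i $ l = (S ** transpose A) $ i $ l" for i l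
      proof -
        have "(K ** transpose (mat 1 - B)) $ i $ l = (\<Sum>k\<in>UNIV. K $ i $ k * ((if l = k then 1 else 0) - B $ l $ k))"
          by (simp add: matrix_matrix_mult_def transpose_def mat_def)
        also have "\<dots> = (\<Sum>k\<in>UNIV. (if l = k then K $ i $ k else 0) - B $ l $ k * K $ i $ k)"
          by (rule sum.cong) (auto simp: algebra_simps)
        also have "\<dots> = K $ i $ l - (\<Sum>k\<in>UNIV. B $ l $ k * K $ i $ k)"
          by (simp add: sum_subtractf)
        also have "\<dots> = (S ** transpose A) $ i $ l"
          using ent[of i l] by (simp add: matrix_matrix_mult_def transpose_def mult.commute)
        finally show ?thesis .
      qed
      then show ?thesis by (simp add: vec_eq_iff)
    qed
  qed
  have KSC: "K = S ** C"
  proof -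
    define Mi where "Mi = matrix_inv (mat 1 - B)"
    have "Mi ** (mat 1 - B) = mat 1"
      using invB unfolding invertible_def Mi_def matrix_inv_def by (rule someI_ex[THEN conjunct2])
    then have "transpose (mat 1 - B) ** transpose Mi = mat 1"
      by (metis matrix_transpose_mul transpose_mat)
    then have "K = (K ** transpose (mat 1 - B)) ** transpose Mi" by (simp flip: matrix_mul_assoc)
    also have "\<dots> = S ** C" using keyX by (simp add: C_def Mi_def matrix_mul_assoc)
    finally show ?thesis .
  qed
  have Kz: "K *v v = 0 \<longleftrightarrow> C *v v = 0" for v
  proof
    assume "K *v v = 0"
    then have "S *v (C *v v) = 0" by (simp add: KSC matrix_vector_mul_assoc)
    then show "C *v v = 0" using covI invertible_mult_zero unfolding S_def by blast
  qed (simp add: KSC flip: matrix_vector_mul_assoc)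
  have sol: "\<beta> \<in> moment_solutions M I X Y \<longleftrightarrow> C *v (\<beta>s - \<beta>) = 0" for \<beta>
    unfolding moment_solutions_def using keyY[of _ \<beta>] Kz[of "\<beta>s - \<beta>"] by (simp add: vec_eq_iff)
  have part1: "identifiable_coord M I X Y \<beta>s j \<longleftrightarrow> null_coord C j = {0}"
  proof
    assume idf: "identifiable_coord M I X Y \<beta>s j"
    show "null_coord C j = {0}"
    proof (rule set_eqI, rule iffI)
      fix x :: real assume "x \<in> null_coord C j"
      then obtain w where w: "C *v w = 0" "x = w $ j" unfolding null_coord_def by blast
      have "C *v (\<beta>s - (\<beta>s - w)) = 0" using w by simp
      then have "\<beta>s - w \<in> moment_solutions M I X Y" using sol by blast
      then have "(\<beta>s - w) $ j \<in> {\<beta>s $ j}" using idf unfolding identifiable_coord_def by blast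
      then show "x \<in> {0}" using w by simp
    next
      fix x :: real assume "x \<in> {0}"
      then show "x \<in> null_coord C j" unfolding null_coord_def by (auto intro: exI[of _ 0])
    qed
  next
    assume nc: "null_coord C j = {0}"
    show "identifiable_coord M I X Y \<beta>s j" unfolding identifiable_coord_def
    proof (rule set_eqI, rule iffI)
      fix x :: real assume "x \<in> {\<beta> $ j |\<beta>. \<beta> \<in> moment_solutions M I X Y}"
      then obtain \<beta> where b: "\<beta> \<in> moment_solutions M I X Y" "x = \<beta> $ j" by blast
      have "(\<beta>s - \<beta>) $ j \<in> null_coord C j" using b sol unfolding null_coord_def by blast
      then show "x \<in> {\<beta>s $ j}" using nc b by simp
    next
      fix x :: real assume "x \<in> {\<beta>s $ j}"
      moreover have "\<beta>s \<in> moment_solutions M I X Y" using sol by simp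
      ultimately show "x \<in> {\<beta> $ j |\<beta>. \<beta> \<in> moment_solutions M I X Y}" by blast
    qed
  qed
  have cvY: "cov_vec M I Y = K *v \<beta>s"
  proof -
    have "covar M (\<lambda>\<omega>. I \<omega> $ i) Y = (K *v \<beta>s) $ i" for i
      using keyY[of i 0] by simp
    then show ?thesis unfolding cov_vec_def by (simp add: vec_eq_iff)
  qed
  have part2: "\<beta>s $ j = (moore_penrose (cov_mat M I X) *v cov_vec M I Y) $ j" if nc: "null_coord C j = {0}"
  proof -
    define G where "G = moore_penrose K"
    have "K *v ((G ** K) *v \<beta>s - \<beta>s) = 0"
      using moore_penrose[of K] by (simp add: G_def matrix_vector_mult_diff_distrib matrix_vector_mul_assoc matrix_mul_assoc)
    then have "C *v ((G ** K) *v \<beta>s - \<beta>s) = 0" using Kz by blast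
    then have "((G ** K) *v \<beta>s - \<beta>s) $ j \<in> null_coord C j" unfolding null_coord_def by blast
    then have "((G ** K) *v \<beta>s - \<beta>s) $ j = 0" using nc by simp
    then show ?thesis using cvY by (simp add: G_def K_def matrix_vector_mul_assoc)
  qed
  show ?thesis using part1 part2 by blast
qed

end
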